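(* The functional $\mathcal{E}^{\rm TF}$ is uniformly bounded from below on $\mathcal{M}^{\rm TF}$. Moreover, for any $p>1$, it is lower semicontinuous on $\mathcal{M}^{\rm TF}$ under strong convergence in $L^1(\mathbb{R}^2)\cap L^p(\mathbb{R}^2)$.
   Context: Let $K\ge1$ be an integer and $x_1,\ldots,x_K\in\mathbb{R}^2$. Set $V_{\rm nuc}(x)=-\sum_{i=1}^K\log|x-x_i|$, $D(\sigma,\sigma)=-\frac12\iint\sigma(x)\log|x-y|\sigma(y)\,dx\,dy$, and $\mathcal{E}^{\rm TF}[\sigma]=-\int_{\mathbb{R}^2}V_{\rm nuc}\sigma+D(\sigma,\sigma)$, on $\mathcal{M}^{\rm TF}=\{\sigma\in L^\infty(\mathbb{R}^2)\cap L^1(\mathbb{R}^2,\log(2+|x|)dx):0\leq\sigma\leq1,\ \int\sigma=K\}$. *)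

theory Defs
  imports "HOL-Analysis.Analysis"
begin

definition V_nuc :: "nat \<Rightarrow> (nat \<Rightarrow> real^2) \<Rightarrow> real^2 \<Rightarrow> real" where
  "V_nuc K xs x = - (\<Sum>i=1..K. ln (norm (x - xs i)))"

definition D_TF :: "(real^2 \<Rightarrow> real) \<Rightarrow> (real^2 \<Rightarrow> real) \<Rightarrow> real" where
  "D_TF \<sigma> \<tau> = - (1/2) * (\<integral>z. \<sigma> (fst z) * ln (norm (fst z - snd z)) * \<tau> (snd z)
                          \<partial>(lborel \<Otimes>\<^sub>M lborel))"

definition E_TF :: "nat \<Rightarrow> (nat \<Rightarrow> real^2) \<Rightarrow> (real^2 \<Rightarrow> real) \<Rightarrow> real" where
  "E_TF K xs \<sigma> = - (\<integral>x. V_nuc K xs x * \<sigma> x \<partial>lborel) + D_TF \<sigma> \<sigma>"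

definition M_TF :: "nat \<Rightarrow> (real^2 \<Rightarrow> real) set" where
  "M_TF K = {\<sigma>. \<sigma> \<in> borel_measurable lborel
              \<and> (AE x in lborel. 0 \<le> \<sigma> x \<and> \<sigma> x \<le> 1)
              \<and> integrable lborel (\<lambda>x. \<sigma> x * ln (2 + norm x))
              \<and> (\<integral>x. \<sigma> x \<partial>lborel) = real K}"

end

theory Submission
  imports Defs "HOL-Analysis.Ball_Volume"
begin


definition lnm :: "real \<Rightarrow> real" where "lnm r = max 0 (- ln r)"
definition lnp :: "real \<Rightarrow> real" where "lnp r = max 0 (ln r)"

lemma lnm_nonneg[simp]: "0 \<le> lnm r" by (simp add: lnm_def)
lemma lnp_nonneg[simp]: "0 \<le> lnp r" by (simp add: lnp_def)
lemma ln_split: "ln r = lnp r - lnm r" by (simp add: lnm_def lnp_def)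

lemma lnm_meas[measurable]: "lnm \<in> borel_measurable borel"
  unfolding lnm_def by measurable
lemma lnp_meas[measurable]: "lnp \<in> borel_measurable borel"
  unfolding lnp_def by measurable

lemma cball_borel[measurable]: "cball (c::'a::euclidean_space) r \<in> sets borel"
  by (simp add: borel_closed)

lemma lnm_dyadic:
  assumes "0 \<le> r"
  shows "ennreal (lnm r) \<le> (\<Sum>k. ennreal (ln 2) * indicator {..(1/2::real)^k} r)"
proof (cases "r = 0 \<or> r \<ge> 1")
  case True
  then have "lnm r = 0" using assms by (auto simp: lnm_def)
  then show ?thesis by simp
next
  case False
  then have r0: "0 < r" "r < 1" using assms by auto
  define m where "m = nat \<lfloor>log 2 (1/r)\<rfloor>"
  have lpos: "0 < log 2 (1/r)" using r0 by simp
  have m1: "real m \<le> log 2 (1/r)" using lpos unfolding m_def by linarith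
  have m2: "log 2 (1/r) < real m + 1" using lpos unfolding m_def by linarith
  have "1/r < 2 powr (real m + 1)" using m2 r0 by (subst (asm) log_less_iff) auto
  then have "ln (1/r) < ln (2 powr (real m + 1))" using r0 by (subst ln_less_cancel_iff) auto
  then have lnb: "lnm r \<le> (real m + 1) * ln 2" using r0
    by (simp add: lnm_def ln_powr ln_div)
  have "2 powr (real m) \<le> 1/r" using m1 r0 by (subst (asm) le_log_iff) auto
  then have "(2::real) ^ m \<le> 1/r" by (simp add: powr_realpow)
  then have rm: "r \<le> (1/2)^m" using r0 by (simp add: field_simps power_divide)
  have ind: "k < Suc m \<Longrightarrow> indicator {..(1/2::real)^k} r = (1::ennreal)" for k
  proof -
    assume "k < Suc m"
    then have "(1/2::real)^m \<le> (1/2)^k" by (intro power_decreasing) auto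
    then have "r \<le> (1/2)^k" using rm by linarith
    then show ?thesis by (simp add: indicator_def)
  qed
  have "ennreal (lnm r) \<le> ennreal ((real m + 1) * ln 2)" using lnb by (rule ennreal_leI)
  also have "\<dots> = (\<Sum>k<Suc m. ennreal (ln 2) * indicator {..(1/2::real)^k} r)"
    using ind by (simp add: ennreal_mult' ennreal_of_nat_eq_real_of_nat[symmetric] mult.commute add.commute)
  also have "\<dots> \<le> (\<Sum>k. ennreal (ln 2) * indicator {..(1/2::real)^k} r)"
    by (intro sum_le_suminf) auto
  finally show ?thesis .
qed

lemma nn_lnm_finite: "(\<integral>\<^sup>+ x. ennreal (lnm (norm (x::real^2))) \<partial>lborel) < \<infinity>"
proof -
  define V where "V = unit_ball_vol (DIM(real^2))"
  have V0: "0 \<le> V" unfolding V_def by simp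
  have "(\<integral>\<^sup>+ x. ennreal (lnm (norm (x::real^2))) \<partial>lborel)
     \<le> (\<integral>\<^sup>+ x. (\<Sum>k. ennreal (ln 2) * indicator (cball (0::real^2) ((1/2)^k)) x) \<partial>lborel)"
    by (intro nn_integral_mono) (use lnm_dyadic in \<open>auto simp: indicator_def mem_cball\<close>)
  also have "\<dots> = (\<Sum>k. \<integral>\<^sup>+ x. ennreal (ln 2) * indicator (cball (0::real^2) ((1/2)^k)) x \<partial>lborel)"
    by (intro nn_integral_suminf) measurable
  also have "\<dots> = (\<Sum>k. ennreal (ln 2) * emeasure lborel (cball (0::real^2) ((1/2)^k)))"
    by (simp add: nn_integral_cmult_indicator)
  also have "\<dots> = (\<Sum>k. ennreal (ln 2 * V * (1/4)^k))"
    by (simp add: emeasure_cball V_def ennreal_mult' power2_eq_square power_mult_distrib[symmetric] mult.assoc flip: power_mult)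
  also have "\<dots> = ennreal (\<Sum>k. ln 2 * V * (1/4)^k)"
    using V0 by (intro suminf_ennreal2) (auto intro!: summable_mult summable_geometric)
  also have "\<dots> < \<infinity>" by simp
  finally show ?thesis .
qed

lemma nn_lnm_shift: "(\<integral>\<^sup>+ x. ennreal (lnm (norm (x - c::real^2))) \<partial>lborel) = (\<integral>\<^sup>+ x. ennreal (lnm (norm (x::real^2))) \<partial>lborel)"
proof -
  have "(\<integral>\<^sup>+ x. ennreal (lnm (norm (x::real^2))) \<partial>lborel)
      = (\<integral>\<^sup>+ x. ennreal (lnm (norm x)) \<partial>distr lborel borel ((+) (-c)))"
    by (simp add: lborel_distr_plus)
  also have "\<dots> = (\<integral>\<^sup>+ x. ennreal (lnm (norm (-c + x))) \<partial>lborel)"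
    by (subst nn_integral_distr) auto
  finally show ?thesis by simp
qed

lemma integrable_lnm: "integrable lborel (\<lambda>x::real^2. lnm (norm (x - c)))"
proof (intro integrableI_bounded)
  have "(\<integral>\<^sup>+ x. ennreal (norm (lnm (norm (x - c)))) \<partial>lborel) = (\<integral>\<^sup>+ x. ennreal (lnm (norm (x::real^2))) \<partial>lborel)"
    by (simp add: nn_lnm_shift)
  then show "(\<integral>\<^sup>+ x. ennreal (norm (lnm (norm (x - c)))) \<partial>lborel) < \<infinity>"
    using nn_lnm_finite by simp
qed simp



lemma pos2n[simp]: "0 < 2 + norm (x::'a::real_normed_vector)"
  using norm_ge_zero[of x] by linarith
lemma ln2n_nonneg[simp]: "0 \<le> ln (2 + norm (x::'a::real_normed_vector))"
  using norm_ge_zero[of x] by (intro ln_ge_zero) linarith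

definition good :: "nat \<Rightarrow> (real^2 \<Rightarrow> real) \<Rightarrow> bool" where
  "good K t \<longleftrightarrow> t \<in> borel_measurable lborel \<and> (\<forall>x. 0 \<le> t x \<and> t x \<le> 1)
     \<and> integrable lborel (\<lambda>x. t x * ln (2 + norm x)) \<and> (\<integral>x. t x \<partial>lborel) = real K"

lemma good_meas: "good K t \<Longrightarrow> t \<in> borel_measurable lborel" by (simp add: good_def)
lemma good_nonneg: "good K t \<Longrightarrow> 0 \<le> t x" by (simp add: good_def)
lemma good_le1: "good K t \<Longrightarrow> t x \<le> 1" by (simp add: good_def)
lemma good_intlog: "good K t \<Longrightarrow> integrable lborel (\<lambda>x. t x * ln (2 + norm x))" by (simp add: good_def)
lemma good_mass: "good K t \<Longrightarrow> (\<integral>x. t x \<partial>lborel) = real K" by (simp add: good_def)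

lemma good_int: assumes "good K t" shows "integrable lborel t"
proof -
  have m[measurable]: "t \<in> borel_measurable lborel" using good_meas[OF assms] .
  have "integrable lborel (\<lambda>x. t x * ln (2 + norm x) / ln 2)"
    using good_intlog[OF assms] by simp
  then show ?thesis
  proof (rule Bochner_Integration.integrable_bound)
    show "t \<in> borel_measurable lborel" by simp
    show "AE x in lborel. norm (t x) \<le> norm (t x * ln (2 + norm x) / ln 2)"
    proof (intro AE_I2)
      fix x :: "real^2"
      have "ln 2 \<le> ln (2 + norm x)" by (subst ln_le_cancel_iff) auto
      then have "t x * ln 2 \<le> t x * ln (2 + norm x)" using good_nonneg[OF assms, of x]
        by (intro mult_left_mono) auto
      then have "t x \<le> t x * ln (2 + norm x) / ln 2" by (simp add: field_simps)
      moreover have "0 \<le> t x * ln (2 + norm x) / ln 2" using good_nonneg[OF assms, of x] by simp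
      ultimately show "norm (t x) \<le> norm (t x * ln (2 + norm x) / ln 2)"
        using good_nonneg[OF assms, of x] by simp
    qed
  qed
qed

lemma lnp_small: "0 \<le> a \<Longrightarrow> a \<le> 1 \<Longrightarrow> lnp a = 0"
  by (cases "a = 0") (auto simp: lnp_def)

lemma lnp_max1: "0 \<le> a \<Longrightarrow> lnp a = ln (max 1 a)"
proof (cases "a \<le> 1")
  case True
  assume "0 \<le> a" then show ?thesis using True by (simp add: lnp_small max_def)
next
  case False
  then show ?thesis by (simp add: lnp_def max_def)
qed

lemma lnp_le: "lnp (norm (x - c)) \<le> ln (2 + norm x) + ln (2 + norm (c::real^2))"
proof (cases "norm (x - c) \<le> 1")
  case True
  then have "lnp (norm (x - c)) = 0" by (simp add: lnp_small)
  moreover have "0 \<le> ln (2 + norm x)" using norm_ge_zero[of x] by (intro ln_ge_zero) linarith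
  moreover have "0 \<le> ln (2 + norm c)" using norm_ge_zero[of c] by (intro ln_ge_zero) linarith
  ultimately show ?thesis by linarith
next
  case False
  then have "lnp (norm (x - c)) = ln (norm (x - c))" by (simp add: lnp_def)
  also have "\<dots> \<le> ln ((2 + norm x) * (2 + norm c))"
  proof (subst ln_le_cancel_iff)
    show "norm (x - c) \<le> (2 + norm x) * (2 + norm c)"
    proof -
      have "norm x + norm c \<le> (2 + norm x) * (2 + norm c)"
        using mult_nonneg_nonneg[of "norm x" "norm c"] by (simp add: algebra_simps)
      then show ?thesis using norm_triangle_ineq4[of x c] by linarith
    qed
  qed (use False in auto)
  also have "\<dots> = ln (2 + norm x) + ln (2 + norm c)" by (rule ln_mult_pos) simp_all
  finally show ?thesis .
qed

lemma good_int_lnp: assumes "good K t"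
  shows "integrable lborel (\<lambda>x. t x * lnp (norm (x - c)))"
proof -
  have m[measurable]: "t \<in> borel_measurable lborel" using good_meas[OF assms] .
  have "integrable lborel (\<lambda>x. t x * ln (2 + norm x) + ln (2 + norm c) * t x)"
    using good_intlog[OF assms] good_int[OF assms] by simp
  then show ?thesis
  proof (rule Bochner_Integration.integrable_bound)
    show "(\<lambda>x. t x * lnp (norm (x - c))) \<in> borel_measurable lborel" by measurable
    show "AE x in lborel. norm (t x * lnp (norm (x - c))) \<le> norm (t x * ln (2 + norm x) + ln (2 + norm c) * t x)"
    proof (intro AE_I2)
      fix x
      have t0: "0 \<le> t x" using good_nonneg[OF assms] .
      have l0: "0 \<le> ln (2 + norm x)" using norm_ge_zero[of x] by (intro ln_ge_zero) linarith
      have l1: "0 \<le> ln (2 + norm c)" using norm_ge_zero[of c] by (intro ln_ge_zero) linarith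
      have "t x * lnp (norm (x - c)) \<le> t x * (ln (2 + norm x) + ln (2 + norm c))"
        using lnp_le[of x c] t0 by (intro mult_left_mono) auto
      moreover have "0 \<le> t x * ln (2 + norm x)" "0 \<le> ln (2 + norm c) * t x" using t0 l0 l1 by simp_all
      ultimately show "norm (t x * lnp (norm (x - c))) \<le> norm (t x * ln (2 + norm x) + ln (2 + norm c) * t x)"
        using t0 by (simp add: algebra_simps)
    qed
  qed
qed

lemma good_int_lnm: assumes "good K t"
  shows "integrable lborel (\<lambda>x. t x * lnm (norm (x - c)))"
proof -
  have m[measurable]: "t \<in> borel_measurable lborel" using good_meas[OF assms] .
  show ?thesis using integrable_lnm[of c]
  proof (rule Bochner_Integration.integrable_bound)
    show "(\<lambda>x. t x * lnm (norm (x - c))) \<in> borel_measurable lborel" by measurable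
    show "AE x in lborel. norm (t x * lnm (norm (x - c))) \<le> norm (lnm (norm (x - c)))"
      using good_nonneg[OF assms] good_le1[OF assms]
      by (intro AE_I2) (simp add: mult_left_le_one_le)
  qed
qed

lemma int_prod:
  fixes f g :: "real^2 \<Rightarrow> real"
  assumes f: "integrable lborel f" and g: "integrable lborel g"
  shows "integrable (lborel \<Otimes>\<^sub>M lborel) (\<lambda>z. f (fst z) * g (snd z))"
    and "(\<integral>z. f (fst z) * g (snd z) \<partial>(lborel \<Otimes>\<^sub>M lborel)) = (\<integral>x. f x \<partial>lborel) * (\<integral>x. g x \<partial>lborel)"
proof -
  have [measurable]: "f \<in> borel_measurable lborel" "g \<in> borel_measurable lborel" using f g by auto
  show I: "integrable (lborel \<Otimes>\<^sub>M lborel) (\<lambda>z. f (fst z) * g (snd z))"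
  proof (rule integrableI_bounded)
    have "(\<integral>\<^sup>+ z. ennreal (norm (f (fst z) * g (snd z))) \<partial>(lborel \<Otimes>\<^sub>M lborel))
        = (\<integral>\<^sup>+ x. \<integral>\<^sup>+ y. ennreal (norm (f x)) * ennreal (norm (g y)) \<partial>lborel \<partial>lborel)"
      by (subst lborel.nn_integral_fst[symmetric]) (auto simp: abs_mult ennreal_mult)
    also have "\<dots> = (\<integral>\<^sup>+ x. ennreal (norm (f x)) \<partial>lborel) * (\<integral>\<^sup>+ y. ennreal (norm (g y)) \<partial>lborel)"
      by (simp add: nn_integral_cmult nn_integral_multc)
    also have "\<dots> < \<infinity>" using f g
      by (simp add: integrable_iff_bounded ennreal_mult_less_top)
    finally show "(\<integral>\<^sup>+ z. ennreal (norm (f (fst z) * g (snd z))) \<partial>(lborel \<Otimes>\<^sub>M lborel)) < \<infinity>" .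
  qed simp
  have "(\<integral>z. f (fst z) * g (snd z) \<partial>(lborel \<Otimes>\<^sub>M lborel)) = (\<integral>x. \<integral>y. f x * g y \<partial>lborel \<partial>lborel)"
    using lborel_pair.integral_fst[of "\<lambda>x y. f x * g y"] I by (simp add: case_prod_beta')
  also have "\<dots> = (\<integral>x. f x * (\<integral>y. g y \<partial>lborel) \<partial>lborel)" by simp
  also have "\<dots> = (\<integral>x. f x \<partial>lborel) * (\<integral>x. g x \<partial>lborel)" by simp
  finally show "(\<integral>z. f (fst z) * g (snd z) \<partial>(lborel \<Otimes>\<^sub>M lborel)) = (\<integral>x. f x \<partial>lborel) * (\<integral>x. g x \<partial>lborel)" .
qed



abbreviation PP :: "((real^2) \<times> (real^2)) measure" where "PP \<equiv> lborel \<Otimes>\<^sub>M lborel"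

definition SP :: "nat \<Rightarrow> (nat \<Rightarrow> real^2) \<Rightarrow> real^2 \<Rightarrow> real" where
  "SP K xs x = (\<Sum>i=1..K. lnp (norm (x - xs i)))"
definition SM :: "nat \<Rightarrow> (nat \<Rightarrow> real^2) \<Rightarrow> real^2 \<Rightarrow> real" where
  "SM K xs x = (\<Sum>i=1..K. lnm (norm (x - xs i)))"

lemma SP_meas[measurable]: "SP K xs \<in> borel_measurable borel"
  unfolding SP_def by measurable
lemma SM_meas[measurable]: "SM K xs \<in> borel_measurable borel"
  unfolding SM_def by measurable
lemma SP_nonneg: "0 \<le> SP K xs x" unfolding SP_def by (intro sum_nonneg) simp
lemma SM_nonneg: "0 \<le> SM K xs x" unfolding SM_def by (intro sum_nonneg) simp

lemma V_split: "V_nuc K xs x = SM K xs x - SP K xs x"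
  unfolding V_nuc_def SP_def SM_def by (simp add: ln_split sum_subtractf)

lemma ln_le_one: "ln (norm (x - y)) \<le> ln 2 + lnp (norm (x - c)) + lnp (norm (y - (c::real^2)))"
proof (cases "x = y")
  case True then show ?thesis by simp
next
  case False
  define A where "A = max 1 (norm (x - c))"
  define B where "B = max 1 (norm (y - c))"
  have A1: "1 \<le> A" and B1: "1 \<le> B" unfolding A_def B_def by auto
  have "norm (x - y) \<le> norm (x - c) + norm (y - c)"
    using norm_triangle_ineq4[of "x - c" "y - c"] by simp
  also have "\<dots> \<le> A * B + A * B"
  proof (intro add_mono)
    have "norm (x - c) \<le> A" by (simp add: A_def)
    also have "A = A * 1" by simp
    also have "\<dots> \<le> A * B" using A1 B1 by (intro mult_left_mono) auto
    finally show "norm (x - c) \<le> A * B" .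
    have "norm (y - c) \<le> B" by (simp add: B_def)
    also have "B = 1 * B" by simp
    also have "\<dots> \<le> A * B" using A1 B1 by (intro mult_right_mono) auto
    finally show "norm (y - c) \<le> A * B" .
  qed
  finally have le: "norm (x - y) \<le> 2 * A * B" by simp
  have "ln (norm (x - y)) \<le> ln (2 * A * B)"
    using le False A1 B1 by (subst ln_le_cancel_iff) auto
  also have "\<dots> = ln 2 + ln A + ln B" using A1 B1
    by (simp add: ln_mult_pos)
  finally show ?thesis by (simp add: lnp_max1 A_def B_def)
qed

lemma ln_le_SP:
  assumes "K \<ge> 1"
  shows "ln (norm (x - y)) \<le> ln 2 + (SP K xs x + SP K xs y) / real K"
proof -
  have "(\<Sum>i=1..K. ln (norm (x - y))) \<le> (\<Sum>i=1..K. ln 2 + lnp (norm (x - xs i)) + lnp (norm (y - xs i)))"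
    by (intro sum_mono ln_le_one)
  then have "real K * ln (norm (x - y)) \<le> real K * ln 2 + SP K xs x + SP K xs y"
    by (simp add: SP_def sum.distrib)
  then show ?thesis using assms by (simp add: field_simps)
qed

definition HH :: "nat \<Rightarrow> (nat \<Rightarrow> real^2) \<Rightarrow> real^2 \<Rightarrow> real^2 \<Rightarrow> real" where
  "HH K xs x y = (SP K xs x + SP K xs y) / real K + ln 2 - ln (norm (x - y))"

lemma HH_nonneg: "K \<ge> 1 \<Longrightarrow> 0 \<le> HH K xs x y"
  using ln_le_SP[of K x y xs] by (simp add: HH_def)

lemma HH_meas[measurable]: "(\<lambda>z. HH K xs (fst z) (snd z)) \<in> borel_measurable PP"
  unfolding HH_def by measurable

definition QQ :: "nat \<Rightarrow> (nat \<Rightarrow> real^2) \<Rightarrow> (real^2 \<Rightarrow> real) \<Rightarrow> real" where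
  "QQ K xs t = (\<integral>z. t (fst z) * t (snd z) * HH K xs (fst z) (snd z) \<partial>PP)"

context
  fixes K :: nat and xs :: "nat \<Rightarrow> real^2" and t :: "real^2 \<Rightarrow> real"
  assumes K1: "K \<ge> 1" and gt: "good K t"
begin

lemma tm[measurable]: "t \<in> borel_measurable borel"
  using good_meas[OF gt] by simp

lemma int_tSP: "integrable lborel (\<lambda>x. t x * SP K xs x)"
  unfolding SP_def sum_distrib_left by (intro Bochner_Integration.integrable_sum good_int_lnp[OF gt])

lemma int_tSM: "integrable lborel (\<lambda>x. t x * SM K xs x)"
  unfolding SM_def sum_distrib_left by (intro Bochner_Integration.integrable_sum good_int_lnm[OF gt])

lemma int_t: "integrable lborel t" using good_int[OF gt] .

lemma int1: "integrable PP (\<lambda>z. t (fst z) * SP K xs (fst z) * t (snd z))"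
  and int1v: "(\<integral>z. t (fst z) * SP K xs (fst z) * t (snd z) \<partial>PP) = (\<integral>x. t x * SP K xs x \<partial>lborel) * real K"
  using int_prod[OF int_tSP int_t] good_mass[OF gt] by auto

lemma int2: "integrable PP (\<lambda>z. t (fst z) * (t (snd z) * SP K xs (snd z)))"
  and int2v: "(\<integral>z. t (fst z) * (t (snd z) * SP K xs (snd z)) \<partial>PP) = real K * (\<integral>x. t x * SP K xs x \<partial>lborel)"
  using int_prod[OF int_t int_tSP] good_mass[OF gt] by auto

lemma int3: "integrable PP (\<lambda>z. t (fst z) * t (snd z))"
  and int3v: "(\<integral>z. t (fst z) * t (snd z) \<partial>PP) = real K * real K"
  using int_prod[OF int_t int_t] good_mass[OF gt] by auto

lemma int_lnp: "integrable PP (\<lambda>z. t (fst z) * lnp (norm (fst z - snd z)) * t (snd z))"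
proof -
  have "integrable PP (\<lambda>z. ln 2 * (t (fst z) * t (snd z)) + (t (fst z) * SP K xs (fst z) * t (snd z)) / real K
            + (t (fst z) * (t (snd z) * SP K xs (snd z))) / real K)"
    using int1 int2 int3 by auto
  then show ?thesis
  proof (rule Bochner_Integration.integrable_bound)
    show "(\<lambda>z. t (fst z) * lnp (norm (fst z - snd z)) * t (snd z)) \<in> borel_measurable PP" by measurable
    show "AE z in PP. norm (t (fst z) * lnp (norm (fst z - snd z)) * t (snd z))
        \<le> norm (ln 2 * (t (fst z) * t (snd z)) + (t (fst z) * SP K xs (fst z) * t (snd z)) / real K
            + (t (fst z) * (t (snd z) * SP K xs (snd z))) / real K)"
    proof (intro AE_I2)
      fix z :: "(real^2) \<times> (real^2)"
      obtain x y where z: "z = (x, y)" by fastforce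
      have tx: "0 \<le> t x" "0 \<le> t y" using good_nonneg[OF gt] by auto
      have "lnp (norm (x - y)) \<le> ln 2 + (SP K xs x + SP K xs y) / real K"
        using ln_le_SP[OF K1, of x y xs] SP_nonneg[of K xs x] SP_nonneg[of K xs y] K1
        by (simp add: lnp_def)
      then have ineq: "t x * t y * lnp (norm (x - y)) \<le> t x * t y * (ln 2 + (SP K xs x + SP K xs y) / real K)"
        using tx by (intro mult_left_mono) auto
      have n2: "0 \<le> t x * t y * (ln 2 + (SP K xs x + SP K xs y) / real K)"
        using tx SP_nonneg[of K xs x] SP_nonneg[of K xs y] by simp
      have R: "ln 2 * (t x * t y) + (t x * SP K xs x * t y) / real K + (t x * (t y * SP K xs y)) / real K
         = t x * t y * (ln 2 + (SP K xs x + SP K xs y) / real K)"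
        by (simp add: distrib_left add_divide_distrib mult_ac)
      have L: "t x * lnp (norm (x - y)) * t y = t x * t y * lnp (norm (x - y))" by (simp add: mult_ac)
      have n1: "0 \<le> t x * t y * lnp (norm (x - y))" using tx by simp
      show "norm (t (fst z) * lnp (norm (fst z - snd z)) * t (snd z))
        \<le> norm (ln 2 * (t (fst z) * t (snd z)) + (t (fst z) * SP K xs (fst z) * t (snd z)) / real K
            + (t (fst z) * (t (snd z) * SP K xs (snd z))) / real K)"
        unfolding z fst_conv snd_conv real_norm_def L R
        by (simp only: abs_of_nonneg[OF n1] abs_of_nonneg[OF n2] ineq)
    qed
  qed
qed

lemma int_lnm: "integrable PP (\<lambda>z. t (fst z) * lnm (norm (fst z - snd z)) * t (snd z))"
proof (rule integrableI_bounded)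
  show "(\<lambda>z. t (fst z) * lnm (norm (fst z - snd z)) * t (snd z)) \<in> borel_measurable PP" by measurable
  have "(\<integral>\<^sup>+ z. ennreal (norm (t (fst z) * lnm (norm (fst z - snd z)) * t (snd z))) \<partial>PP)
      \<le> (\<integral>\<^sup>+ z. ennreal (t (snd z)) * ennreal (lnm (norm (fst z - snd z))) \<partial>PP)"
  proof (intro nn_integral_mono)
    fix z :: "(real^2) \<times> (real^2)"
    have "t (fst z) * lnm (norm (fst z - snd z)) * t (snd z) \<le> t (snd z) * lnm (norm (fst z - snd z))"
      using good_nonneg[OF gt] good_le1[OF gt]
      by (simp add: mult_left_le_one_le mult.commute mult.left_commute)
    then show "ennreal (norm (t (fst z) * lnm (norm (fst z - snd z)) * t (snd z)))
         \<le> ennreal (t (snd z)) * ennreal (lnm (norm (fst z - snd z)))"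
      using good_nonneg[OF gt] by (simp add: ennreal_mult'[symmetric] ennreal_leI)
  qed
  also have "\<dots> = (\<integral>\<^sup>+ y. \<integral>\<^sup>+ x. ennreal (t y) * ennreal (lnm (norm (x - y))) \<partial>lborel \<partial>lborel)"
    by (subst lborel_pair.nn_integral_snd[symmetric]) auto
  also have "\<dots> = (\<integral>\<^sup>+ y. ennreal (t y) * (\<integral>\<^sup>+ x. ennreal (lnm (norm (x::real^2))) \<partial>lborel) \<partial>lborel)"
    by (simp add: nn_integral_cmult nn_lnm_shift)
  also have "\<dots> = (\<integral>\<^sup>+ y. ennreal (t y) \<partial>lborel) * (\<integral>\<^sup>+ x. ennreal (lnm (norm (x::real^2))) \<partial>lborel)"
    by (simp add: nn_integral_multc)
  also have "\<dots> < \<infinity>"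
    using int_t nn_lnm_finite good_nonneg[OF gt]
    by (simp add: integrable_iff_bounded ennreal_mult_less_top)
  finally show "(\<integral>\<^sup>+ z. ennreal (norm (t (fst z) * lnm (norm (fst z - snd z)) * t (snd z))) \<partial>PP) < \<infinity>" .
qed

lemma int_ln: "integrable PP (\<lambda>z. t (fst z) * ln (norm (fst z - snd z)) * t (snd z))"
proof -
  have "integrable PP (\<lambda>z. t (fst z) * lnp (norm (fst z - snd z)) * t (snd z) - t (fst z) * lnm (norm (fst z - snd z)) * t (snd z))"
    using int_lnp int_lnm by auto
  moreover have "(\<lambda>z. t (fst z) * lnp (norm (fst z - snd z)) * t (snd z) - t (fst z) * lnm (norm (fst z - snd z)) * t (snd z))
     = (\<lambda>z. t (fst z) * ln (norm (fst z - snd z)) * t (snd z))"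
    by (rule ext) (simp only: ln_split left_diff_distrib right_diff_distrib)
  ultimately show ?thesis by simp
qed

end


lemma int_SM: "integrable lborel (SM K xs)"
  unfolding SM_def by (intro Bochner_Integration.integrable_sum integrable_lnm)

context
  fixes K :: nat and xs :: "nat \<Rightarrow> real^2" and t :: "real^2 \<Rightarrow> real"
  assumes K1: "K \<ge> 1" and gt: "good K t"
begin

lemma int_HH: "integrable PP (\<lambda>z. t (fst z) * t (snd z) * HH K xs (fst z) (snd z))"
proof -
  have "integrable PP (\<lambda>z. (t (fst z) * SP K xs (fst z) * t (snd z)) / real K
      + (t (fst z) * (t (snd z) * SP K xs (snd z))) / real K + ln 2 * (t (fst z) * t (snd z))
      - t (fst z) * ln (norm (fst z - snd z)) * t (snd z))"
    using int1[OF K1 gt] int2[OF K1 gt] int3[OF K1 gt] int_ln[OF K1 gt] by auto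
  moreover have "(\<lambda>z. (t (fst z) * SP K xs (fst z) * t (snd z)) / real K
      + (t (fst z) * (t (snd z) * SP K xs (snd z))) / real K + ln 2 * (t (fst z) * t (snd z))
      - t (fst z) * ln (norm (fst z - snd z)) * t (snd z))
     = (\<lambda>z. t (fst z) * t (snd z) * HH K xs (fst z) (snd z))"
    by (rule ext) (simp add: HH_def add_divide_distrib diff_divide_distrib algebra_simps)
  ultimately show ?thesis by simp
qed

lemma QQ_val: "QQ K xs t = 2 * (\<integral>x. t x * SP K xs x \<partial>lborel) + ln 2 * real K * real K
   - (\<integral>z. t (fst z) * ln (norm (fst z - snd z)) * t (snd z) \<partial>PP)"
proof -
  have eq: "(\<lambda>z. t (fst z) * t (snd z) * HH K xs (fst z) (snd z)) = (\<lambda>z. (t (fst z) * SP K xs (fst z) * t (snd z)) / real K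
      + (t (fst z) * (t (snd z) * SP K xs (snd z))) / real K + ln 2 * (t (fst z) * t (snd z))
      - t (fst z) * ln (norm (fst z - snd z)) * t (snd z))"
    by (rule ext) (simp add: HH_def add_divide_distrib diff_divide_distrib algebra_simps)
  have K0: "real K \<noteq> 0" using K1 by simp
  show ?thesis
    unfolding QQ_def eq
    using int1[OF K1 gt] int2[OF K1 gt] int3[OF K1 gt] int_ln[OF K1 gt]
      int1v[OF K1 gt] int2v[OF K1 gt] int3v[OF K1 gt] K0
    by (simp add: Bochner_Integration.integral_diff Bochner_Integration.integral_add)
qed

lemma nuc_val: "- (\<integral>x. V_nuc K xs x * t x \<partial>lborel) = (\<integral>x. t x * SP K xs x \<partial>lborel) - (\<integral>x. t x * SM K xs x \<partial>lborel)"
proof -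
  have "(\<lambda>x. V_nuc K xs x * t x) = (\<lambda>x. t x * SM K xs x - t x * SP K xs x)"
    by (rule ext) (simp add: V_split algebra_simps)
  then show ?thesis
    using int_tSP[OF K1 gt] int_tSM[OF K1 gt]
    by (simp add: Bochner_Integration.integral_diff)
qed

lemma E_identity: "E_TF K xs t = QQ K xs t / 2 - real K * real K * ln 2 / 2 - (\<integral>x. t x * SM K xs x \<partial>lborel)"
  unfolding E_TF_def D_TF_def nuc_val QQ_val by (simp add: algebra_simps)

lemma QQ_nonneg: "0 \<le> QQ K xs t"
  unfolding QQ_def using good_nonneg[OF gt] HH_nonneg[OF K1]
  by (intro integral_nonneg_AE AE_I2) simp

lemma QQ_nn: "ennreal (QQ K xs t) = (\<integral>\<^sup>+ z. ennreal (t (fst z) * t (snd z) * HH K xs (fst z) (snd z)) \<partial>PP)"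
  unfolding QQ_def using good_nonneg[OF gt] HH_nonneg[OF K1]
  by (intro nn_integral_eq_integral[symmetric] int_HH AE_I2) simp

lemma tSM_le: "(\<integral>x. t x * SM K xs x \<partial>lborel) \<le> (\<integral>x. SM K xs x \<partial>lborel)"
  using int_tSM[OF K1 gt] int_SM good_nonneg[OF gt] good_le1[OF gt] SM_nonneg
  by (intro integral_mono) (auto intro: mult_left_le_one_le)

lemma E_lower: "- (real K * real K * ln 2 / 2) - (\<integral>x. SM K xs x \<partial>lborel) \<le> E_TF K xs t"
  using E_identity QQ_nonneg tSM_le by linarith

end


lemma AE_PP:
  assumes "AE x in lborel. P x"
  shows "AE z in PP. P (fst z) \<and> P (snd z)"
proof -
  from assms obtain N where N: "{x \<in> space lborel. \<not> P x} \<subseteq> N" "emeasure lborel N = 0" "N \<in> sets lborel"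
    by (elim AE_E)
  have Nn: "N \<in> null_sets lborel" using N by auto
  have "N \<times> UNIV \<in> null_sets PP" using Nn by (intro lborel.times_in_null_sets1) auto
  moreover have "UNIV \<times> N \<in> null_sets PP" using Nn by (intro lborel.times_in_null_sets2) auto
  ultimately have "N \<times> UNIV \<union> UNIV \<times> N \<in> null_sets PP" by auto
  moreover have "{z \<in> space PP. \<not> (P (fst z) \<and> P (snd z))} \<subseteq> N \<times> UNIV \<union> UNIV \<times> N"
    using N(1) by auto
  ultimately show ?thesis by (rule AE_I')
qed

lemma lsc_good:
  fixes K :: nat and xs :: "nat \<Rightarrow> real^2"
  assumes K1: "K \<ge> 1" and gt: "good K t" and gu: "\<And>n. good K (u n)"
    and conv: "(\<lambda>n. \<integral>x. \<bar>u n x - t x\<bar> \<partial>lborel) \<longlonglongrightarrow> 0"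
  shows "ereal (E_TF K xs t) \<le> liminf (\<lambda>n. ereal (E_TF K xs (u n)))"
proof -
  define c where "c = real K * real K * ln 2 / 2"
  define m where "m = (\<lambda>f. \<integral>x. f x * SM K xs x \<partial>lborel)"
  have Eid: "\<And>f. good K f \<Longrightarrow> E_TF K xs f = QQ K xs f / 2 - c - m f"
    unfolding c_def m_def using E_identity[OF K1] by blast
  have [measurable]: "t \<in> borel_measurable borel" using good_meas[OF gt] by simp
  have [measurable]: "\<And>n. u n \<in> borel_measurable borel" using good_meas[OF gu] by simp
  have main: "eventually (\<lambda>n. y < E_TF K xs (u n)) sequentially" if y: "y < E_TF K xs t" for y
  proof (rule ccontr)
    assume "\<not> eventually (\<lambda>n. y < E_TF K xs (u n)) sequentially"
    then obtain r :: "nat \<Rightarrow> nat" where r: "strict_mono r" "\<And>n. \<not> y < E_TF K xs (u (r n))"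
      using not_eventually_sequentiallyD by blast
    have "(\<lambda>n. \<integral>x. \<bar>u (r n) x - t x\<bar> \<partial>lborel) \<longlonglongrightarrow> 0"
      using LIMSEQ_subseq_LIMSEQ[OF conv r(1)] by (simp add: comp_def)
    then have "\<exists>q::nat\<Rightarrow>nat. strict_mono q \<and> (AE x in lborel. (\<lambda>n. u (r (q n)) x - t x) \<longlonglongrightarrow> 0)"
      using good_int[OF gu] good_int[OF gt]
      by (intro tendsto_L1_AE_subseq[where u="\<lambda>n x. u (r n) x - t x"]) auto
    then obtain q :: "nat \<Rightarrow> nat" where q: "AE x in lborel. (\<lambda>n. u (r (q n)) x - t x) \<longlonglongrightarrow> 0"
      by blast
    define v where "v = (\<lambda>n. u (r (q n)))"
    have gv: "\<And>n. good K (v n)" unfolding v_def using gu by simp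
    have [measurable]: "\<And>n. v n \<in> borel_measurable borel" using good_meas[OF gv] by simp
    have Ev: "\<And>n. E_TF K xs (v n) \<le> y" unfolding v_def using r(2) by (simp add: not_less)
    have aev: "AE x in lborel. (\<lambda>n. v n x) \<longlonglongrightarrow> t x"
      using q unfolding v_def
    proof eventually_elim
      case (elim x)
      then have "(\<lambda>n. (u (r (q n)) x - t x) + t x) \<longlonglongrightarrow> 0 + t x" by (intro tendsto_add) auto
      then show ?case by simp
    qed
    have mconv: "(\<lambda>n. m (v n)) \<longlonglongrightarrow> m t"
      unfolding m_def
    proof (rule integral_dominated_convergence[where w="SM K xs"])
      show "(\<lambda>x. t x * SM K xs x) \<in> borel_measurable lborel" by measurable
      show "\<And>i. (\<lambda>x. v i x * SM K xs x) \<in> borel_measurable lborel" by measurable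
      show "integrable lborel (SM K xs)" by (rule int_SM)
      show "AE x in lborel. (\<lambda>i. v i x * SM K xs x) \<longlonglongrightarrow> t x * SM K xs x"
        using aev by eventually_elim (auto intro: tendsto_mult)
      show "\<And>i. AE x in lborel. norm (v i x * SM K xs x) \<le> SM K xs x"
        using good_nonneg[OF gv] good_le1[OF gv] SM_nonneg
        by (intro AE_I2) (simp add: abs_mult mult_left_le_one_le)
    qed
    define F where "F = (\<lambda>f z. ennreal (f (fst z) * f (snd z) * HH K xs (fst z) (snd z)))"
    have Fm[measurable]: "\<And>n. F (v n) \<in> borel_measurable PP" unfolding F_def by measurable
    have aeF: "AE z in PP. (\<lambda>n. F (v n) z) \<longlonglongrightarrow> F t z"
      using AE_PP[OF aev]
    proof eventually_elim
      case (elim z)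
      then show ?case unfolding F_def by (intro tendsto_ennrealI tendsto_mult) auto
    qed
    have "ennreal (QQ K xs t) = (\<integral>\<^sup>+ z. F t z \<partial>PP)"
      unfolding F_def by (rule QQ_nn[OF K1 gt])
    also have "\<dots> = (\<integral>\<^sup>+ z. liminf (\<lambda>n. F (v n) z) \<partial>PP)"
      using aeF by (intro nn_integral_cong_AE) (auto elim!: eventually_mono intro: lim_imp_Liminf[symmetric])
    also have "\<dots> \<le> liminf (\<lambda>n. \<integral>\<^sup>+ z. F (v n) z \<partial>PP)"
      by (intro nn_integral_liminf) simp
    also have "\<dots> = liminf (\<lambda>n. ennreal (QQ K xs (v n)))"
      unfolding F_def using QQ_nn[OF K1 gv] by simp
    also have "\<dots> \<le> liminf (\<lambda>n. ennreal (2 * (y + c + m (v n))))"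
    proof (intro Liminf_mono always_eventually allI ennreal_leI)
      fix n
      show "QQ K xs (v n) \<le> 2 * (y + c + m (v n))" using Eid[OF gv, of n] Ev[of n] by simp
    qed
    also have "\<dots> = ennreal (2 * (y + c + m t))"
      by (intro lim_imp_Liminf) (auto intro!: tendsto_intros mconv)
    finally have le: "ennreal (QQ K xs t) \<le> ennreal (2 * (y + c + m t))" .
    have "0 \<le> 2 * (y + c + m t)"
    proof (rule LIMSEQ_le_const)
      show "(\<lambda>n. 2 * (y + c + m (v n))) \<longlonglongrightarrow> 2 * (y + c + m t)" by (auto intro!: tendsto_intros mconv)
      show "\<exists>N. \<forall>n\<ge>N. 0 \<le> 2 * (y + c + m (v n))"
      proof (intro exI allI impI)
        fix n :: nat
        show "0 \<le> 2 * (y + c + m (v n))"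
          using Eid[OF gv, of n] Ev[of n] QQ_nonneg[OF K1 gv[of n], of xs] by argo
      qed
    qed
    then have "QQ K xs t \<le> 2 * (y + c + m t)" using le by (simp add: ennreal_le_iff)
    then show False using Eid[OF gt] y by simp
  qed
  show ?thesis
  proof (unfold le_Liminf_iff, intro allI impI)
    fix y' :: ereal assume y': "y' < ereal (E_TF K xs t)"
    obtain y where y: "y < E_TF K xs t" "y' \<le> ereal y"
    proof (cases y')
      case (real r) then show ?thesis using that y' by auto
    next
      case PInf then show ?thesis using y' by auto
    next
      case MInf then show ?thesis using that[of "E_TF K xs t - 1"] by auto
    qed
    show "eventually (\<lambda>n. y' < ereal (E_TF K xs (u n))) sequentially"
    proof (rule eventually_mono[OF main[OF y(1)]])
      fix n assume "y < E_TF K xs (u n)"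
      then have "ereal y < ereal (E_TF K xs (u n))" by simp
      with y(2) show "y' < ereal (E_TF K xs (u n))" by (rule order.strict_trans1)
    qed
  qed
qed



definition cl :: "(real^2 \<Rightarrow> real) \<Rightarrow> real^2 \<Rightarrow> real" where
  "cl f x = max 0 (min 1 (f x))"

lemma V_nuc_meas[measurable]: "V_nuc K xs \<in> borel_measurable borel"
  unfolding V_nuc_def by measurable

lemma M_TF_meas: "f \<in> M_TF K \<Longrightarrow> f \<in> borel_measurable borel"
  by (simp add: M_TF_def)

lemma cl_AE: assumes "f \<in> M_TF K" shows "AE x in lborel. cl f x = f x"
proof -
  have "AE x in lborel. 0 \<le> f x \<and> f x \<le> 1" using assms by (simp add: M_TF_def)
  then show ?thesis unfolding cl_def by eventually_elim auto
qed

lemma cl_meas[measurable]: assumes [measurable]: "f \<in> borel_measurable borel"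
  shows "cl f \<in> borel_measurable borel"
  unfolding cl_def by measurable

lemma cl_good:
  assumes f: "f \<in> M_TF K"
  shows "good K (cl f)"
proof -
  have [measurable]: "f \<in> borel_measurable borel" using M_TF_meas[OF f] .
  have ae: "AE x in lborel. cl f x = f x" using cl_AE[OF f] .
  have i1: "integrable lborel (\<lambda>x. f x * ln (2 + norm x))" using f by (simp add: M_TF_def)
  have ae2: "AE x in lborel. f x * ln (2 + norm x) = cl f x * ln (2 + norm x)"
    using ae by eventually_elim simp
  have i: "integrable lborel (\<lambda>x. cl f x * ln (2 + norm x))"
    by (rule integrable_cong_AE_imp[OF i1 _ ae2]) measurable
  have "(\<integral>x. cl f x \<partial>lborel) = (\<integral>x. f x \<partial>lborel)"
    using ae by (intro integral_cong_AE) auto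
  also have "\<dots> = real K" using f by (simp add: M_TF_def)
  finally have mass: "integral\<^sup>L lborel (cl f) = real K" .
  have b: "\<forall>x. 0 \<le> cl f x \<and> cl f x \<le> 1" by (simp add: cl_def)
  show ?thesis unfolding good_def using i mass b by simp
qed

lemma E_cong:
  assumes [measurable]: "f \<in> borel_measurable borel" "g \<in> borel_measurable borel"
    and ae: "AE x in lborel. f x = g x"
  shows "E_TF K xs f = E_TF K xs g"
proof -
  have "(\<integral>x. V_nuc K xs x * f x \<partial>lborel) = (\<integral>x. V_nuc K xs x * g x \<partial>lborel)"
    using ae by (intro integral_cong_AE) (auto elim!: eventually_mono)
  moreover have "D_TF f f = D_TF g g"
  proof -
    have "AE z in PP. f (fst z) * ln (norm (fst z - snd z)) * f (snd z) = g (fst z) * ln (norm (fst z - snd z)) * g (snd z)"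
      using AE_PP[OF ae] by eventually_elim simp
    then have "(\<integral>z. f (fst z) * ln (norm (fst z - snd z)) * f (snd z) \<partial>PP) = (\<integral>z. g (fst z) * ln (norm (fst z - snd z)) * g (snd z) \<partial>PP)"
      by (intro integral_cong_AE) auto
    then show ?thesis unfolding D_TF_def by simp
  qed
  ultimately show ?thesis unfolding E_TF_def by simp
qed

lemma E_cl: "f \<in> M_TF K \<Longrightarrow> E_TF K' xs f = E_TF K' xs (cl f)"
  using cl_AE[of f K] M_TF_meas[of f K]
  by (intro E_cong) (auto simp: cl_def elim!: eventually_mono)

theorem lemma3p4:
  fixes K :: nat and xs :: "nat \<Rightarrow> real^2"
  assumes "K \<ge> 1"
  shows "(\<exists>C. \<forall>\<sigma>\<in>M_TF K. C \<le> E_TF K xs \<sigma>)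
    \<and> (\<forall>p::real. p > 1 \<longrightarrow>
         (\<forall>\<sigma> s. \<sigma> \<in> M_TF K \<and> (\<forall>n. s n \<in> M_TF K)
            \<and> ((\<lambda>n. \<integral>x. \<bar>s n x - \<sigma> x\<bar> \<partial>lborel) \<longlonglongrightarrow> 0)
            \<and> ((\<lambda>n. \<integral>x. \<bar>s n x - \<sigma> x\<bar> powr p \<partial>lborel) \<longlonglongrightarrow> 0)
            \<longrightarrow> ereal (E_TF K xs \<sigma>) \<le> liminf (\<lambda>n. ereal (E_TF K xs (s n)))))"
proof (intro conjI allI impI)
  show "\<exists>C. \<forall>\<sigma>\<in>M_TF K. C \<le> E_TF K xs \<sigma>"
  proof (intro exI ballI)
    fix \<sigma> assume s: "\<sigma> \<in> M_TF K"
    show "- (real K * real K * ln 2 / 2) - (\<integral>x. SM K xs x \<partial>lborel) \<le> E_TF K xs \<sigma>"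
      using E_lower[OF assms cl_good[OF s], of xs] E_cl[OF s, of K xs] by simp
  qed
next
  fix p :: real and \<sigma> and s :: "nat \<Rightarrow> real^2 \<Rightarrow> real"
  assume H: "\<sigma> \<in> M_TF K \<and> (\<forall>n. s n \<in> M_TF K)
            \<and> ((\<lambda>n. \<integral>x. \<bar>s n x - \<sigma> x\<bar> \<partial>lborel) \<longlonglongrightarrow> 0)
            \<and> ((\<lambda>n. \<integral>x. \<bar>s n x - \<sigma> x\<bar> powr p \<partial>lborel) \<longlonglongrightarrow> 0)"
  then have s: "\<sigma> \<in> M_TF K" and sn: "\<And>n. s n \<in> M_TF K"
    and c: "(\<lambda>n. \<integral>x. \<bar>s n x - \<sigma> x\<bar> \<partial>lborel) \<longlonglongrightarrow> 0" by auto
  have [measurable]: "\<sigma> \<in> borel_measurable borel" using M_TF_meas[OF s] .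
  have [measurable]: "\<And>n. s n \<in> borel_measurable borel" using M_TF_meas[OF sn] .
  have eq: "(\<integral>x. \<bar>cl (s n) x - cl \<sigma> x\<bar> \<partial>lborel) = (\<integral>x. \<bar>s n x - \<sigma> x\<bar> \<partial>lborel)" for n
  proof (rule integral_cong_AE)
    show "AE x in lborel. \<bar>cl (s n) x - cl \<sigma> x\<bar> = \<bar>s n x - \<sigma> x\<bar>"
      using cl_AE[OF s] cl_AE[OF sn[of n]] by eventually_elim simp
  qed (auto simp: cl_def)
  have "ereal (E_TF K xs (cl \<sigma>)) \<le> liminf (\<lambda>n. ereal (E_TF K xs (cl (s n))))"
    using c by (intro lsc_good[OF assms cl_good[OF s] cl_good[OF sn]]) (simp add: eq)
  then show "ereal (E_TF K xs \<sigma>) \<le> liminf (\<lambda>n. ereal (E_TF K xs (s n)))"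
    using E_cl[OF s, of K xs] E_cl[OF sn, of K xs] by simp
qed


end
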